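(* Let $A:\mathbb{R}^n\to\mathbb{R}$ be smooth and $\mathbb{Z}^n$-periodic. Suppose $\phi_0,\phi_1$ are smooth $\mathbb{Z}^n$-periodic functions such that $u=\frac12|x|^2+\phi_0$ and $v=\frac12|x|^2+\phi_1$ are convex (with positive definite Hessians) and $$\sum_{i,j}\partial_i\partial_j u^{ij}=\sum_{i,j}\partial_i\partial_j v^{ij}=A.$$ Then $\phi_0=\phi_1+c$ for some constant $c$.
   Context: $(u^{ij})$, $(v^{ij})$ denote the inverses of the Hessian matrices of $u$, $v$. *)

theory Defs
  imports "HOL-Analysis.Analysis"
begin

definition partial :: "'n::finite \<Rightarrow> (real^'n \<Rightarrow> real) \<Rightarrow> real^'n \<Rightarrow> real" where
  "partial i f x = frechet_derivative f (at x) (axis i 1)"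

fun iter_partial :: "'n::finite list \<Rightarrow> (real^'n \<Rightarrow> real) \<Rightarrow> real^'n \<Rightarrow> real" where
  "iter_partial [] f = f"
| "iter_partial (i # is) f = partial i (iter_partial is f)"

definition smooth :: "(real^'n::finite \<Rightarrow> real) \<Rightarrow> bool" where
  "smooth f \<longleftrightarrow> (\<forall>is x. iter_partial is f differentiable (at x))"

definition int_vec :: "real^'n::finite \<Rightarrow> bool" where
  "int_vec k \<longleftrightarrow> (\<forall>i. k $ i \<in> \<int>)"

definition Zn_periodic :: "(real^'n::finite \<Rightarrow> real) \<Rightarrow> bool" where
  "Zn_periodic f \<longleftrightarrow> (\<forall>x k. int_vec k \<longrightarrow> f (x + k) = f x)"

definition hessian :: "(real^'n::finite \<Rightarrow> real) \<Rightarrow> real^'n \<Rightarrow> real^'n^'n" where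
  "hessian f x = (\<chi> i j. partial i (partial j f) x)"

definition pos_def :: "real^'n^'n::finite \<Rightarrow> bool" where
  "pos_def M \<longleftrightarrow> (\<forall>\<xi>. \<xi> \<noteq> 0 \<longrightarrow> \<xi> \<bullet> (M *v \<xi>) > 0)"

definition abreu_op :: "(real^'n::finite \<Rightarrow> real) \<Rightarrow> real^'n \<Rightarrow> real" where
  "abreu_op u x = (\<Sum>i\<in>UNIV. \<Sum>j\<in>UNIV.
      partial i (partial j (\<lambda>y. matrix_inv (hessian u y) $ i $ j)) x)"

end

theory Submission
  imports Defs
begin

lemma partial_has:
  "f differentiable (at x) \<Longrightarrow> (f has_derivative frechet_derivative f (at x)) (at x)"
  using frechet_derivative_works by blast

lemma partial_eq:
  "(f has_derivative f') (at x) \<Longrightarrow> partial i f x = f' (axis i 1)"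
  unfolding partial_def by (metis frechet_derivative_at)

lemma iter_partial_snoc: "iter_partial (is @ [i]) f = iter_partial is (partial i f)"
  by (induction "is") auto

definition smoothk :: "nat \<Rightarrow> (real^'n::finite \<Rightarrow> real) \<Rightarrow> bool" where
  "smoothk n f \<longleftrightarrow> (\<forall>(is::'n list) x. length is \<le> n \<longrightarrow> iter_partial is f differentiable (at x))"

lemma smooth_iff_k: "smooth f \<longleftrightarrow> (\<forall>n. smoothk n f)"
  unfolding smooth_def smoothk_def by auto

lemma smoothk_0: "smoothk 0 f \<longleftrightarrow> (\<forall>x. f differentiable (at x))"
  unfolding smoothk_def by auto

lemma smoothk_Suc: fixes f :: "real^'n::finite \<Rightarrow> real" shows "smoothk (Suc n) f \<longleftrightarrow> (\<forall>x. f differentiable (at x)) \<and> (\<forall>i::'n. smoothk n (partial i f))"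
proof
  assume a: "smoothk (Suc n) f"
  have 1: "\<forall>x. f differentiable (at x)"
  proof
    fix x show "f differentiable (at x)" using a[unfolded smoothk_def, rule_format, of "[]" x] by simp
  qed
  have 2: "smoothk n (partial i f)" for i
    unfolding smoothk_def
  proof (intro allI impI)
    fix "is" :: "'n list" and x assume "length is \<le> n"
    then show "iter_partial is (partial i f) differentiable (at x)"
      using a[unfolded smoothk_def, rule_format, of "is @ [i]" x] by (simp add: iter_partial_snoc)
  qed
  show "(\<forall>x. f differentiable (at x)) \<and> (\<forall>i::'n. smoothk n (partial i f))" using 1 2 by blast
next
  assume a: "(\<forall>x. f differentiable (at x)) \<and> (\<forall>i::'n. smoothk n (partial i f))"
  show "smoothk (Suc n) f" unfolding smoothk_def
  proof (intro allI impI)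
    fix "is" :: "'n list" and x assume l: "length is \<le> Suc n"
    show "iter_partial is f differentiable (at x)"
    proof (cases "is" rule: rev_cases)
      case Nil then show ?thesis using a by simp
    next
      case (snoc js j)
      then have "length js \<le> n" using l by simp
      then show ?thesis using a snoc unfolding smoothk_def by (simp add: iter_partial_snoc)
    qed
  qed
qed

lemma smoothk_mono: "smoothk (Suc n) f \<Longrightarrow> smoothk n f"
  unfolding smoothk_def by auto

lemma smoothk_le: "smoothk m f \<Longrightarrow> n \<le> m \<Longrightarrow> smoothk n f"
  unfolding smoothk_def by auto

lemma smooth_diff: "smooth f \<Longrightarrow> f differentiable (at x)"
  using smooth_iff_k smoothk_0 by blast

lemma smooth_partial: "smooth f \<Longrightarrow> smooth (partial i f)"
  using smooth_iff_k smoothk_Suc by blast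

lemma smooth_iff: fixes f :: "real^'n::finite \<Rightarrow> real" shows "smooth f \<longleftrightarrow> (\<forall>x. f differentiable (at x)) \<and> (\<forall>i::'n. smooth (partial i f))"
proof
  assume "smooth f" then show "(\<forall>x. f differentiable (at x)) \<and> (\<forall>i::'n. smooth (partial i f))"
    using smooth_iff_k smoothk_Suc smooth_diff by blast
next
  assume "(\<forall>x. f differentiable (at x)) \<and> (\<forall>i::'n. smooth (partial i f))"
  then have "smoothk (Suc n) f" for n using smooth_iff_k smoothk_Suc by blast
  then show "smooth f" using smooth_iff_k smoothk_mono by blast
qed

lemma smooth_cont: "smooth f \<Longrightarrow> continuous_on S f"
  by (intro continuous_at_imp_continuous_on ballI differentiable_imp_continuous_within smooth_diff)

lemma partial_const: "partial i (\<lambda>x. c) x = 0"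
proof -
  have "partial i (\<lambda>x. c) x = (\<lambda>_. 0::real) (axis i 1)" by (rule partial_eq) (rule has_derivative_const)
  then show ?thesis by simp
qed

lemma partial_add: "f differentiable (at x) \<Longrightarrow> g differentiable (at x) \<Longrightarrow>
   partial i (\<lambda>x. f x + g x) x = partial i f x + partial i g x"
proof -
  assume a: "f differentiable (at x)" "g differentiable (at x)"
  have "partial i (\<lambda>x. f x + g x) x = frechet_derivative f (at x) (axis i 1) + frechet_derivative g (at x) (axis i 1)"
    using partial_eq[OF has_derivative_add[OF partial_has[OF a(1)] partial_has[OF a(2)]]] .
  then show ?thesis by (simp add: partial_def)
qed

lemma partial_diff: "f differentiable (at x) \<Longrightarrow> g differentiable (at x) \<Longrightarrow>
   partial i (\<lambda>x. f x - g x) x = partial i f x - partial i g x"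
proof -
  assume a: "f differentiable (at x)" "g differentiable (at x)"
  have "partial i (\<lambda>x. f x - g x) x = frechet_derivative f (at x) (axis i 1) - frechet_derivative g (at x) (axis i 1)"
    using partial_eq[OF has_derivative_diff[OF partial_has[OF a(1)] partial_has[OF a(2)]]] .
  then show ?thesis by (simp add: partial_def)
qed

lemma partial_mult: "f differentiable (at x) \<Longrightarrow> g differentiable (at x) \<Longrightarrow>
   partial i (\<lambda>x. f x * g x) x = partial i f x * g x + f x * partial i g x"
proof -
  assume a: "f differentiable (at x)" "g differentiable (at x)"
  have "partial i (\<lambda>x. f x * g x) x = f x * frechet_derivative g (at x) (axis i 1) + frechet_derivative f (at x) (axis i 1) * g x"
    using partial_eq[OF has_derivative_mult[OF partial_has[OF a(1)] partial_has[OF a(2)]]] .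
  then show ?thesis using partial_eq[OF partial_has[OF a(1)]] partial_eq[OF partial_has[OF a(2)]] by simp
qed

lemma partial_inverse: "f differentiable (at x) \<Longrightarrow> f x \<noteq> 0 \<Longrightarrow>
   partial i (\<lambda>x. inverse (f x)) x = - partial i f x * (inverse (f x) * inverse (f x))"
proof -
  assume a: "f differentiable (at x)" "f x \<noteq> 0"
  have "partial i (\<lambda>x. inverse (f x)) x = - (inverse (f x) * frechet_derivative f (at x) (axis i 1) * inverse (f x))"
    using partial_eq[OF Deriv.has_derivative_inverse[OF a(2) partial_has[OF a(1)]]] .
  then show ?thesis using partial_eq[OF partial_has[OF a(1)]] by (simp add: algebra_simps)
qed

lemma smoothk_const: "smoothk n (\<lambda>x::real^'n::finite. c)"
proof (induction n arbitrary: c)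
  case 0 then show ?case by (simp add: smoothk_0)
next
  case (Suc n)
  have "partial i (\<lambda>x::real^'n. c) = (\<lambda>x. 0)" for i by (rule ext) (rule partial_const)
  then show ?case using Suc by (simp add: smoothk_Suc)
qed

lemma smoothk_add: "smoothk n f \<Longrightarrow> smoothk n g \<Longrightarrow> smoothk n (\<lambda>x. f x + g x)"
proof (induction n arbitrary: f g)
  case 0 then show ?case by (simp add: smoothk_0)
next
  case (Suc n)
  have d: "\<forall>x. f differentiable (at x)" "\<forall>x. g differentiable (at x)" using Suc.prems smoothk_Suc by blast+
  have "partial i (\<lambda>x. f x + g x) = (\<lambda>x. partial i f x + partial i g x)" for i
    by (rule ext) (simp add: partial_add d)
  then show ?case using Suc d by (simp add: smoothk_Suc)
qed

lemma smoothk_diff: "smoothk n f \<Longrightarrow> smoothk n g \<Longrightarrow> smoothk n (\<lambda>x. f x - g x)"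
proof (induction n arbitrary: f g)
  case 0 then show ?case by (simp add: smoothk_0)
next
  case (Suc n)
  have d: "\<forall>x. f differentiable (at x)" "\<forall>x. g differentiable (at x)" using Suc.prems smoothk_Suc by blast+
  have "partial i (\<lambda>x. f x - g x) = (\<lambda>x. partial i f x - partial i g x)" for i
    by (rule ext) (simp add: partial_diff d)
  then show ?case using Suc d by (simp add: smoothk_Suc)
qed

lemma smoothk_mult: "smoothk n f \<Longrightarrow> smoothk n g \<Longrightarrow> smoothk n (\<lambda>x. f x * g x)"
proof (induction n arbitrary: f g)
  case 0 then show ?case by (simp add: smoothk_0)
next
  case (Suc n)
  have d: "\<forall>x. f differentiable (at x)" "\<forall>x. g differentiable (at x)" using Suc.prems smoothk_Suc by blast+
  have e: "partial i (\<lambda>x. f x * g x) = (\<lambda>x. partial i f x * g x + f x * partial i g x)" for i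
    by (rule ext) (simp add: partial_mult d)
  have "smoothk n (partial i (\<lambda>x. f x * g x))" for i
    unfolding e
    by (rule smoothk_add; rule Suc.IH) (use Suc.prems smoothk_Suc smoothk_mono in blast)+
  then show ?case using d by (simp add: smoothk_Suc)
qed

lemma smoothk_inverse:
  assumes "smooth f" "\<And>x. f x \<noteq> 0"
  shows "smoothk n (\<lambda>x. inverse (f x))"
proof (induction n)
  case 0 then show ?case using assms by (simp add: smoothk_0 smooth_diff)
next
  case (Suc n)
  have d: "\<forall>x. f differentiable (at x)" using assms smooth_diff by blast
  have e: "partial i (\<lambda>x. inverse (f x)) = (\<lambda>x. (- partial i f x) * (inverse (f x) * inverse (f x)))" for i
    by (rule ext) (simp add: partial_inverse d assms(2))
  have sp: "smoothk n (\<lambda>x. - partial i f x)" for i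
  proof -
    have "smoothk n (\<lambda>x. 0 - partial i f x)"
      by (rule smoothk_diff[OF smoothk_const]) (use assms smooth_partial smooth_iff_k in blast)
    then show ?thesis by simp
  qed
  have "smoothk n (partial i (\<lambda>x. inverse (f x)))" for i
    unfolding e by (intro smoothk_mult sp Suc.IH)
  then show ?case using d assms Suc by (simp add: smoothk_Suc)
qed

lemma smooth_const: "smooth (\<lambda>x. c)" using smoothk_const smooth_iff_k by blast
lemma smooth_add: "smooth f \<Longrightarrow> smooth g \<Longrightarrow> smooth (\<lambda>x. f x + g x)" using smoothk_add smooth_iff_k by blast
lemma smooth_diff': "smooth f \<Longrightarrow> smooth g \<Longrightarrow> smooth (\<lambda>x. f x - g x)" using smoothk_diff smooth_iff_k by blast
lemma smooth_mult: "smooth f \<Longrightarrow> smooth g \<Longrightarrow> smooth (\<lambda>x. f x * g x)" using smoothk_mult smooth_iff_k by blast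
lemma smooth_inverse: "smooth f \<Longrightarrow> (\<And>x. f x \<noteq> 0) \<Longrightarrow> smooth (\<lambda>x. inverse (f x))" using smoothk_inverse smooth_iff_k by blast
lemma smooth_divide: "smooth f \<Longrightarrow> smooth g \<Longrightarrow> (\<And>x. g x \<noteq> 0) \<Longrightarrow> smooth (\<lambda>x. f x / g x)"
  unfolding divide_inverse by (intro smooth_mult smooth_inverse)

lemma smooth_sum: "finite S \<Longrightarrow> (\<And>a. a \<in> S \<Longrightarrow> smooth (F a)) \<Longrightarrow> smooth (\<lambda>x. \<Sum>a\<in>S. F a x)"
  by (induction S rule: finite_induct) (auto intro: smooth_add smooth_const)

lemma smooth_prod: "finite S \<Longrightarrow> (\<And>a. a \<in> S \<Longrightarrow> smooth (F a)) \<Longrightarrow> smooth (\<lambda>x. \<Prod>a\<in>S. F a x)"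
  by (induction S rule: finite_induct) (auto intro: smooth_mult smooth_const)

lemma has_derivative_coord: "((\<lambda>x::real^'n::finite. x $ k) has_derivative (\<lambda>h. h $ k)) (at x)"
  by (simp add: bounded_linear_imp_has_derivative bounded_linear_vec_nth)

lemma partial_coord: "partial i (\<lambda>x::real^'n::finite. x $ k) = (\<lambda>x. if i = k then 1 else 0)"
  by (rule ext) (simp add: partial_eq[OF has_derivative_coord] axis_def)

lemma smooth_coord: "smooth (\<lambda>x::real^'n::finite. x $ k)"
  unfolding smooth_iff[of "\<lambda>x. x $ k"] partial_coord
  using has_derivative_coord smooth_const by (auto simp: differentiable_def)

lemma partial_periodic1:
  assumes d: "\<And>x. f differentiable (at x)" and p: "\<And>x. f (x + k) = f x"
  shows "partial i f (x + k) = partial i f x"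
proof -
  let ?D = "frechet_derivative f (at (x + k))"
  have D: "(f has_derivative ?D) (at (x + k))" using partial_has d by blast
  have t: "((\<lambda>y. y + k) has_derivative (\<lambda>h. h)) (at x)"
    by (auto intro!: derivative_eq_intros)
  have "((\<lambda>y. f (y + k)) has_derivative (\<lambda>h. ?D h)) (at x)"
    using has_derivative_compose[OF t, of f ?D] D by simp
  then have "(f has_derivative ?D) (at x)" using p by simp
  then have "partial i f x = ?D (axis i 1)" by (rule partial_eq)
  moreover have "partial i f (x + k) = ?D (axis i 1)" by (rule partial_eq[OF D])
  ultimately show ?thesis by simp
qed

lemma Zn_periodic_partial:
  assumes "smooth f" "Zn_periodic f"
  shows "Zn_periodic (partial i f)"
  using assms partial_periodic1[of f] smooth_diff unfolding Zn_periodic_def by blast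

lemma deriv_dir:
  assumes d: "\<And>x. f differentiable (at x)"
  shows "((\<lambda>s. f (y + s *\<^sub>R axis i 1)) has_real_derivative partial i f (y + s *\<^sub>R axis i 1)) (at s)"
proof -
  let ?z = "y + s *\<^sub>R axis i 1"
  let ?D = "frechet_derivative f (at ?z)"
  have D: "(f has_derivative ?D) (at ?z)" using partial_has d by blast
  have lin: "bounded_linear ?D" using D has_derivative_bounded_linear by blast
  have t: "((\<lambda>s. y + s *\<^sub>R axis i 1) has_derivative (\<lambda>h. h *\<^sub>R axis i 1)) (at s)"
    by (auto intro!: derivative_eq_intros)
  have "((\<lambda>s. f (y + s *\<^sub>R axis i 1)) has_derivative (\<lambda>h. ?D (h *\<^sub>R axis i 1))) (at s)"
    using has_derivative_compose[OF t D] .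
  moreover have "(\<lambda>h. ?D (h *\<^sub>R axis i 1)) = (*) (partial i f ?z)"
  proof
    fix h show "?D (h *\<^sub>R axis i 1) = partial i f ?z * h"
      using lin by (simp add: partial_def linear_simps)
  qed
  ultimately show ?thesis by (simp add: has_field_derivative_def)
qed

lemma frechet_expand:
  assumes "f differentiable (at x)"
  shows "frechet_derivative f (at x) h = (\<Sum>k\<in>UNIV. h $ k * partial k f x)"
proof -
  let ?D = "frechet_derivative f (at x)"
  have lin: "bounded_linear ?D" using partial_has[OF assms] has_derivative_bounded_linear by blast
  have h: "h = (\<Sum>k\<in>UNIV. h $ k *\<^sub>R axis k 1)"
    by (simp add: vec_eq_iff axis_def if_distrib cong: if_cong)
  have "?D h = ?D (\<Sum>k\<in>UNIV. h $ k *\<^sub>R axis k 1)" using h by simp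
  also have "\<dots> = (\<Sum>k\<in>UNIV. h $ k * ?D (axis k 1))"
    using lin by (simp add: linear_simps linear_sum[OF bounded_linear.linear[OF lin]])
  finally show ?thesis by (simp add: partial_def)
qed

lemma has_derivative_expand:
  assumes "f differentiable (at x)"
  shows "(f has_derivative (\<lambda>h. \<Sum>k\<in>UNIV. h $ k * partial k f x)) (at x)"
proof -
  have "frechet_derivative f (at x) = (\<lambda>h. \<Sum>k\<in>UNIV. h $ k * partial k f x)"
    by (rule ext) (rule frechet_expand[OF assms])
  then show ?thesis using partial_has[OF assms] by simp
qed

lemma half_norm_eq: "(\<lambda>x::real^'n::finite. (1/2) * (norm x)\<^sup>2) = (\<lambda>x. (1/2) * (\<Sum>k\<in>UNIV. x $ k * x $ k))"
  by (rule ext) (simp add: power2_norm_eq_inner inner_vec_def)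

lemma smooth_half_norm: "smooth (\<lambda>x::real^'n::finite. (1/2) * (norm x)\<^sup>2)"
  unfolding half_norm_eq
  by (intro smooth_mult smooth_const smooth_sum smooth_coord) auto

lemma partial_half_norm: "partial j (\<lambda>x::real^'n::finite. (1/2) * (norm x)\<^sup>2) = (\<lambda>x. x $ j)"
proof
  fix x :: "real^'n"
  have "((\<lambda>x::real^'n. (1/2) * (x \<bullet> x)) has_derivative (\<lambda>h. (1/2) * (x \<bullet> h + h \<bullet> x))) (at x)"
    by (auto intro!: derivative_eq_intros)
  then have "partial j (\<lambda>x::real^'n. (1/2) * (x \<bullet> x)) x = (1/2) * (x \<bullet> axis j 1 + axis j 1 \<bullet> x)"
    by (rule partial_eq)
  then show "partial j (\<lambda>x::real^'n. (1/2) * (norm x)\<^sup>2) x = x $ j"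
    by (simp add: power2_norm_eq_inner inner_axis inner_commute)
qed

lemma mvt_mixed:
  assumes sm: "smooth f" and h: "h > 0"
  shows "\<exists>p. norm (p - x) \<le> 2*h \<and>
    f (x + h *\<^sub>R axis i 1 + h *\<^sub>R axis j 1) - f (x + h *\<^sub>R axis i 1) - f (x + h *\<^sub>R axis j 1) + f x
      = h * h * partial j (partial i f) p"
proof -
  define e where "e = axis i (1::real)"
  define d where "d = axis j (1::real)"
  have df: "\<And>x. f differentiable (at x)" using sm smooth_diff by blast
  have dfi: "\<And>x. partial i f differentiable (at x)" using sm smooth_diff smooth_partial by blast
  define g where "g s = f (x + h *\<^sub>R d + s *\<^sub>R e) - f (x + s *\<^sub>R e)" for s
  have dg: "DERIV g s :> partial i f (x + h *\<^sub>R d + s *\<^sub>R e) - partial i f (x + s *\<^sub>R e)" for s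
    unfolding g_def e_def by (intro DERIV_diff deriv_dir df)
  obtain \<xi> where \<xi>: "0 < \<xi>" "\<xi> < h" "g h - g 0 = (h - 0) * (partial i f (x + h *\<^sub>R d + \<xi> *\<^sub>R e) - partial i f (x + \<xi> *\<^sub>R e))"
    using MVT2[OF h, of g "\<lambda>s. partial i f (x + h *\<^sub>R d + s *\<^sub>R e) - partial i f (x + s *\<^sub>R e)"] dg by blast
  define k where "k r = partial i f (x + \<xi> *\<^sub>R e + r *\<^sub>R d)" for r
  have dk: "DERIV k r :> partial j (partial i f) (x + \<xi> *\<^sub>R e + r *\<^sub>R d)" for r
    unfolding k_def d_def by (intro deriv_dir dfi)
  obtain \<eta> where \<eta>: "0 < \<eta>" "\<eta> < h" "k h - k 0 = (h - 0) * partial j (partial i f) (x + \<xi> *\<^sub>R e + \<eta> *\<^sub>R d)"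
    using MVT2[OF h, of k "\<lambda>r. partial j (partial i f) (x + \<xi> *\<^sub>R e + r *\<^sub>R d)"] dk by blast
  have kk: "k h - k 0 = partial i f (x + h *\<^sub>R d + \<xi> *\<^sub>R e) - partial i f (x + \<xi> *\<^sub>R e)"
    unfolding k_def by (simp add: algebra_simps)
  have gg: "g h - g 0 = f (x + h *\<^sub>R e + h *\<^sub>R d) - f (x + h *\<^sub>R e) - f (x + h *\<^sub>R d) + f x"
    unfolding g_def by (simp add: algebra_simps)
  let ?p = "x + \<xi> *\<^sub>R e + \<eta> *\<^sub>R d"
  have "norm (?p - x) \<le> norm (\<xi> *\<^sub>R e) + norm (\<eta> *\<^sub>R d)"
    using norm_triangle_ineq[of "\<xi> *\<^sub>R e" "\<eta> *\<^sub>R d"] by (simp add: algebra_simps)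
  also have "\<dots> = \<xi> + \<eta>" using \<xi> \<eta> by (simp add: e_def d_def)
  finally have np: "norm (?p - x) \<le> 2 * h" using \<xi> \<eta> by simp
  have "partial i f (x + h *\<^sub>R d + \<xi> *\<^sub>R e) - partial i f (x + \<xi> *\<^sub>R e) = h * partial j (partial i f) ?p"
    using kk \<eta>(3) by simp
  then have "g h - g 0 = h * (h * partial j (partial i f) ?p)" using \<xi>(3) by simp
  then have "f (x + h *\<^sub>R e + h *\<^sub>R d) - f (x + h *\<^sub>R e) - f (x + h *\<^sub>R d) + f x = h * h * partial j (partial i f) ?p"
    using gg by simp
  then show ?thesis
    using np unfolding e_def d_def by blast
qed

lemma clairaut:
  assumes sm: "smooth f"
  shows "partial i (partial j f) x = partial j (partial i f) x"
proof (rule ccontr)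
  assume ne: "partial i (partial j f) x \<noteq> partial j (partial i f) x"
  define F1 where "F1 = partial j (partial i f)"
  define F2 where "F2 = partial i (partial j f)"
  define \<epsilon> where "\<epsilon> = \<bar>F2 x - F1 x\<bar> / 2"
  have ep: "\<epsilon> > 0" using ne unfolding \<epsilon>_def F1_def F2_def by simp
  have c1: "continuous_on UNIV F1" unfolding F1_def using sm smooth_partial smooth_cont by blast
  have c2: "continuous_on UNIV F2" unfolding F2_def using sm smooth_partial smooth_cont by blast
  obtain d1 where d1: "d1 > 0" "\<And>y. dist y x < d1 \<Longrightarrow> dist (F1 y) (F1 x) < \<epsilon>"
    using c1 ep unfolding continuous_on_iff by blast
  obtain d2 where d2: "d2 > 0" "\<And>y. dist y x < d2 \<Longrightarrow> dist (F2 y) (F2 x) < \<epsilon>"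
    using c2 ep unfolding continuous_on_iff by blast
  define h where "h = min d1 d2 / 3"
  have h: "h > 0" using d1 d2 by (simp add: h_def)
  obtain p where p: "norm (p - x) \<le> 2*h"
    "f (x + h *\<^sub>R axis i 1 + h *\<^sub>R axis j 1) - f (x + h *\<^sub>R axis i 1) - f (x + h *\<^sub>R axis j 1) + f x
      = h * h * F1 p"
    using mvt_mixed[OF sm h, of x i j] unfolding F1_def by blast
  obtain q where q: "norm (q - x) \<le> 2*h"
    "f (x + h *\<^sub>R axis j 1 + h *\<^sub>R axis i 1) - f (x + h *\<^sub>R axis j 1) - f (x + h *\<^sub>R axis i 1) + f x
      = h * h * F2 q"
    using mvt_mixed[OF sm h, of x j i] unfolding F2_def by blast
  have "h * h * F1 p = h * h * F2 q" using p(2) q(2) by (simp add: algebra_simps)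
  then have eq: "F1 p = F2 q" using h by simp
  have "dist p x < d1" using p(1) h d1 d2 by (simp add: dist_norm h_def)
  then have a1: "\<bar>F1 p - F1 x\<bar> < \<epsilon>" using d1 by (simp add: dist_real_def)
  have "dist q x < d2" using q(1) h d1 d2 by (simp add: dist_norm h_def)
  then have a2: "\<bar>F2 q - F2 x\<bar> < \<epsilon>" using d2 by (simp add: dist_real_def)
  have "F2 x - F1 x = (F1 p - F1 x) - (F2 q - F2 x)" using eq by simp
  then have "\<bar>F2 x - F1 x\<bar> \<le> \<bar>F1 p - F1 x\<bar> + \<bar>F2 q - F2 x\<bar>"
    by (metis abs_triangle_ineq4)
  moreover have "\<bar>F1 p - F1 x\<bar> + \<bar>F2 q - F2 x\<bar> < 2 * \<epsilon>" using a1 a2 by simp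
  ultimately show False unfolding \<epsilon>_def by simp
qed

definition quad :: "real^'n^'n \<Rightarrow> real^'n \<Rightarrow> real" where
  "quad A x = (\<Sum>a\<in>UNIV. \<Sum>b\<in>UNIV. x $ a * A $ a $ b * x $ b)"

lemma ifm1: "(if P then s else 0) * y = (if P then s * y else (0::real))" by simp
lemma ifm2: "y * (if P then s else 0) = (if P then y * s else (0::real))" by simp
lemma sum_if_out: "(\<Sum>b\<in>S. if P then f b else (0::real)) = (if P then (\<Sum>b\<in>S. f b) else 0)" by simp

lemma quad_inner: "x \<bullet> (A *v x) = quad A x"
  by (simp add: quad_def inner_vec_def matrix_vector_mult_def sum_distrib_left mult.assoc)

lemma quad_axis: "quad A (axis k 1) = A $ k $ k"
  by (simp add: quad_def axis_def ifm1 ifm2 sum_if_out sum.delta)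

lemma quad_shift:
  assumes sym: "\<And>a b. A $ a $ b = A $ b $ a"
  shows "quad A (x - s *\<^sub>R axis k 1) = quad A x - 2 * s * (\<Sum>b\<in>UNIV. A $ k $ b * x $ b) + s * s * A $ k $ k"
proof -
  have e: "(x - s *\<^sub>R axis k 1) $ a = x $ a - (if a = k then s else 0)" for a
    by (simp add: axis_def)
  have "quad A (x - s *\<^sub>R axis k 1) = (\<Sum>a\<in>UNIV. \<Sum>b\<in>UNIV. (x $ a - (if a = k then s else 0)) * A $ a $ b * (x $ b - (if b = k then s else 0)))"
    unfolding quad_def e ..
  also have "\<dots> = (\<Sum>a\<in>UNIV. \<Sum>b\<in>UNIV. x $ a * A $ a $ b * x $ b)
      - (\<Sum>a\<in>UNIV. \<Sum>b\<in>UNIV. (if b = k then s else 0) * x $ a * A $ a $ b)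
      - (\<Sum>a\<in>UNIV. \<Sum>b\<in>UNIV. (if a = k then s else 0) * A $ a $ b * x $ b)
      + (\<Sum>a\<in>UNIV. \<Sum>b\<in>UNIV. (if a = k then s else 0) * A $ a $ b * (if b = k then s else 0))"
    by (simp add: algebra_simps sum_subtractf sum.distrib)
  also have "\<dots> = quad A x - s * (\<Sum>a\<in>UNIV. x $ a * A $ a $ k) - s * (\<Sum>b\<in>UNIV. A $ k $ b * x $ b) + s * s * A $ k $ k"
    by (simp add: quad_def ifm1 ifm2 sum_if_out sum.delta sum_distrib_left mult.assoc)
  also have "(\<Sum>a\<in>UNIV. x $ a * A $ a $ k) = (\<Sum>b\<in>UNIV. A $ k $ b * x $ b)"
    using sym by (simp add: mult.commute)
  finally show ?thesis by simp
qed

lemma chol_aux: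
  fixes A :: "real^'n::finite^'n"
  assumes "finite S"
  shows "(\<forall>a b. A$a$b = A$b$a) \<Longrightarrow> (\<forall>a b. a \<notin> S \<or> b \<notin> S \<longrightarrow> A$a$b = 0)
    \<Longrightarrow> (\<forall>x. x \<noteq> 0 \<and> (\<forall>a. a \<notin> S \<longrightarrow> x$a = 0) \<longrightarrow> quad A x > 0)
    \<Longrightarrow> \<exists>c::'n \<Rightarrow> real^'n. \<forall>a b. A$a$b = (\<Sum>m\<in>S. c m $ a * c m $ b)"
  using assms
proof (induction S arbitrary: A rule: finite_induct)
  case empty
  then show ?case by auto
next
  case (insert k S A)
  note sym = insert.prems(1) and supp = insert.prems(2) and pd = insert.prems(3)
  define \<alpha> where "\<alpha> = A $ k $ k"
  have "quad A (axis k 1) > 0"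
    using pd[rule_format, of "axis k 1"] by (auto simp: axis_def vec_eq_iff)
  then have \<alpha>: "\<alpha> > 0" unfolding \<alpha>_def quad_axis .
  define A' :: "real^'n^'n" where "A' = (\<chi> a b. A$a$b - A$a$k * A$k$b / \<alpha>)"
  have A'e: "A' $ a $ b = A$a$b - A$a$k * A$k$b / \<alpha>" for a b unfolding A'_def by simp
  have sym': "\<forall>a b. A'$a$b = A'$b$a" using sym unfolding A'e by (simp add: mult.commute)
  have supp': "\<forall>a b. a \<notin> S \<or> b \<notin> S \<longrightarrow> A'$a$b = 0"
  proof (intro allI impI)
    fix a b assume ab: "a \<notin> S \<or> b \<notin> S"
    show "A'$a$b = 0"
    proof (cases "a = k \<or> b = k")
      case True
      then show ?thesis using \<alpha> sym unfolding A'e \<alpha>_def by auto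
    next
      case False
      then have "a \<notin> insert k S \<or> b \<notin> insert k S" using ab by auto
      then show ?thesis using supp False sym unfolding A'e by (metis insertI1 mult_zero_left mult_zero_right div_0 diff_zero)
    qed
  qed
  have pd': "\<forall>x. x \<noteq> 0 \<and> (\<forall>a. a \<notin> S \<longrightarrow> x$a = 0) \<longrightarrow> quad A' x > 0"
  proof (intro allI impI)
    fix x :: "real^'n" assume x: "x \<noteq> 0 \<and> (\<forall>a. a \<notin> S \<longrightarrow> x$a = 0)"
    define \<beta> where "\<beta> = (\<Sum>b\<in>UNIV. A $ k $ b * x $ b)"
    define \<eta> where "\<eta> = x - (\<beta> / \<alpha>) *\<^sub>R axis k 1"
    obtain j where j: "x $ j \<noteq> 0" using x by (auto simp: vec_eq_iff)
    then have jS: "j \<in> S" using x by auto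
    then have "j \<noteq> k" using insert.hyps by auto
    then have "\<eta> $ j \<noteq> 0" using j by (simp add: \<eta>_def axis_def)
    then have "\<eta> \<noteq> 0" by auto
    moreover have "\<forall>a. a \<notin> insert k S \<longrightarrow> \<eta>$a = 0" using x by (simp add: \<eta>_def axis_def)
    ultimately have q: "quad A \<eta> > 0" using pd by blast
    have "quad A \<eta> = quad A x - 2 * (\<beta> / \<alpha>) * \<beta> + (\<beta> / \<alpha>) * (\<beta> / \<alpha>) * \<alpha>"
      unfolding \<eta>_def using quad_shift[of A x "\<beta> / \<alpha>" k] sym by (simp add: \<alpha>_def \<beta>_def)
    also have "\<dots> = quad A x - \<beta> * \<beta> / \<alpha>" using \<alpha> by (simp add: field_simps)
    also have "quad A x - \<beta> * \<beta> / \<alpha> = quad A' x"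
    proof -
      have "quad A' x = (\<Sum>a\<in>UNIV. \<Sum>b\<in>UNIV. x $ a * A $ a $ b * x $ b) - (\<Sum>a\<in>UNIV. \<Sum>b\<in>UNIV. (x $ a * A $ a $ k) * (A $ k $ b * x $ b) / \<alpha>)"
        unfolding quad_def A'e by (simp add: algebra_simps sum_subtractf)
      also have "(\<Sum>a\<in>UNIV. \<Sum>b\<in>UNIV. (x $ a * A $ a $ k) * (A $ k $ b * x $ b) / \<alpha>) = (\<Sum>a\<in>UNIV. x $ a * A $ a $ k) * \<beta> / \<alpha>"
        unfolding \<beta>_def by (simp add: sum_product sum_divide_distrib)
      also have "(\<Sum>a\<in>UNIV. x $ a * A $ a $ k) = \<beta>" unfolding \<beta>_def using sym by (simp add: mult.commute)
      finally show ?thesis by (simp add: quad_def)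
    qed
    finally show "quad A' x > 0" using q by simp
  qed
  obtain c' where c': "\<forall>a b. A'$a$b = (\<Sum>m\<in>S. c' m $ a * c' m $ b)"
    using insert.IH[OF sym' supp' pd'] by blast
  define c where "c m = (if m = k then (1 / sqrt \<alpha>) *\<^sub>R (\<chi> a. A $ a $ k) else c' m)" for m
  have "A$a$b = (\<Sum>m\<in>insert k S. c m $ a * c m $ b)" for a b
  proof -
    have "(\<Sum>m\<in>insert k S. c m $ a * c m $ b) = c k $ a * c k $ b + (\<Sum>m\<in>S. c' m $ a * c' m $ b)"
      using insert.hyps by (simp add: c_def) (rule sum.cong, auto)
    also have "c k $ a * c k $ b = A$a$k * A$k$b / \<alpha>"
      using \<alpha> sym by (simp add: c_def real_sqrt_mult[symmetric] field_simps)
    finally show ?thesis using c'[rule_format, of a b] A'e[of a b] by simp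
  qed
  then show ?case by blast
qed

lemma chol:
  fixes A :: "real^'n::finite^'n"
  assumes "\<And>a b. A$a$b = A$b$a" "\<And>x. x \<noteq> 0 \<Longrightarrow> quad A x > 0"
  shows "\<exists>C::real^'n^'n. A = transpose C ** C"
proof -
  obtain c :: "'n \<Rightarrow> real^'n" where c: "\<forall>a b. A$a$b = (\<Sum>m\<in>UNIV. c m $ a * c m $ b)"
    using chol_aux[of UNIV A] assms by auto
  define C :: "real^'n^'n" where "C = (\<chi> m a. c m $ a)"
  have "A = transpose C ** C"
    by (simp add: vec_eq_iff c C_def matrix_matrix_mult_def transpose_def)
  then show ?thesis by blast
qed

lemma quad_ge0: "pos_def M \<Longrightarrow> quad M x \<ge> 0"
  unfolding pos_def_def quad_inner[symmetric]
  by (cases "x = 0") (auto intro: less_imp_le)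

lemma quad_eq0: "pos_def M \<Longrightarrow> quad M x = 0 \<Longrightarrow> x = 0"
  unfolding pos_def_def quad_inner[symmetric] by force

lemma matrix_sub_ldistrib: "(A::real^'n::finite^'m::finite) ** (B - C) = A ** B - A ** C"
  by (simp add: matrix_matrix_mult_def vec_eq_iff algebra_simps sum_subtractf)

lemma matrix_sub_rdistrib: "((B::real^'n::finite^'m::finite) - C) ** A = B ** A - C ** A"
  by (simp add: matrix_matrix_mult_def vec_eq_iff algebra_simps sum_subtractf)

lemma trace_prod_diag: "trace (Z ** B ** transpose Z) = (\<Sum>m\<in>UNIV. quad B (Z $ m))"
proof -
  have "(Z ** B ** transpose Z) $ m $ m = quad B (Z $ m)" for m
    unfolding quad_def matrix_matrix_mult_def transpose_def
    by (simp add: sum_distrib_left sum_distrib_right mult.assoc mult.left_commute)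
       (rule sum.swap)
  then show ?thesis by (simp add: trace_def)
qed

lemma pd_invertible:
  fixes U :: "real^'n::finite^'n"
  assumes "pos_def U"
  shows "U ** matrix_inv U = mat 1" "matrix_inv U ** U = mat 1"
proof -
  have "\<forall>x. U *v x = 0 \<longrightarrow> x = 0"
    using assms unfolding pos_def_def by (metis inner_zero_right less_irrefl)
  then obtain B where B: "B ** U = mat 1" using matrix_left_invertible_ker by blast
  then have "U ** B = mat 1" using matrix_left_right_inverse by blast
  then have "\<exists>A'. U ** A' = mat 1 \<and> A' ** U = mat 1" using B by blast
  then have "U ** matrix_inv U = mat 1 \<and> matrix_inv U ** U = mat 1"
    unfolding matrix_inv_def by (rule someI_ex)
  then show "U ** matrix_inv U = mat 1" "matrix_inv U ** U = mat 1" by auto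
qed

lemma inv_sym:
  fixes U :: "real^'n::finite^'n"
  assumes "pos_def U" "transpose U = U"
  shows "transpose (matrix_inv U) = matrix_inv U"
proof -
  let ?P = "matrix_inv U"
  have "transpose ?P ** U = mat 1"
    using pd_invertible(1)[OF assms(1)] assms(2) by (metis matrix_transpose_mul transpose_mat)
  then have "transpose ?P = transpose ?P ** (U ** ?P)" using pd_invertible(1)[OF assms(1)] by simp
  also have "\<dots> = ?P" by (simp add: matrix_mul_assoc \<open>transpose ?P ** U = mat 1\<close>)
  finally show ?thesis .
qed

lemma inv_pd:
  fixes U :: "real^'n::finite^'n"
  assumes "pos_def U"
  shows "pos_def (matrix_inv U)"
  unfolding pos_def_def
proof (intro allI impI)
  fix x :: "real^'n" assume x: "x \<noteq> 0"
  let ?y = "matrix_inv U *v x"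
  have ux: "U *v ?y = x" using pd_invertible(1)[OF assms] by (simp add: matrix_vector_mul_assoc)
  then have "?y \<noteq> 0" using x by auto
  then have "?y \<bullet> (U *v ?y) > 0" using assms unfolding pos_def_def by blast
  then show "x \<bullet> (matrix_inv U *v x) > 0" using ux by (simp add: inner_commute)
qed

lemma zero_mult_matrix: "(0::real^'n::finite^'m::finite) ** A = 0" "A ** (0::real^'n::finite^'m::finite) = 0"
  by (simp_all add: matrix_matrix_mult_def vec_eq_iff)

lemma hess_ineq:
  fixes U V :: "real^'n::finite^'n"
  assumes pU: "pos_def U" and pV: "pos_def V" and sU: "transpose U = U" and sV: "transpose V = V"
  shows "(\<Sum>a\<in>UNIV. \<Sum>b\<in>UNIV. (matrix_inv U $ a $ b - matrix_inv V $ a $ b) * (U $ b $ a - V $ b $ a)) \<le> 0"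
    and "(\<Sum>a\<in>UNIV. \<Sum>b\<in>UNIV. (matrix_inv U $ a $ b - matrix_inv V $ a $ b) * (U $ b $ a - V $ b $ a)) = 0 \<Longrightarrow> U = V"
proof -
  define P where "P = matrix_inv U"
  define Q where "Q = matrix_inv V"
  define W where "W = U - V"
  have UP: "U ** P = mat 1" "P ** U = mat 1" using pd_invertible[OF pU] unfolding P_def by auto
  have VQ: "V ** Q = mat 1" "Q ** V = mat 1" using pd_invertible[OF pV] unfolding Q_def by auto
  have sW: "transpose W = W" unfolding W_def using sU sV by (simp add: transpose_def vec_eq_iff)
  have S: "(\<Sum>a\<in>UNIV. \<Sum>b\<in>UNIV. (matrix_inv U $ a $ b - matrix_inv V $ a $ b) * (U $ b $ a - V $ b $ a))
      = trace ((P - Q) ** W)"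
    unfolding P_def Q_def W_def by (simp add: trace_def matrix_matrix_mult_def)
  have QP: "Q - P = P ** W ** Q"
  proof -
    have "P ** W ** Q = P ** (U ** Q) - P ** (V ** Q)"
      unfolding W_def by (simp add: matrix_sub_ldistrib matrix_sub_rdistrib matrix_mul_assoc)
    also have "\<dots> = Q - P" using UP VQ by (simp add: matrix_mul_assoc)
    finally show ?thesis by simp
  qed
  have tr: "trace ((P - Q) ** W) = - trace (P ** W ** Q ** W)"
  proof -
    have "trace ((P - Q) ** W) = trace (P ** W) - trace (Q ** W)" by (simp add: matrix_sub_rdistrib trace_sub)
    also have "\<dots> = - (trace (Q ** W) - trace (P ** W))" by simp
    also have "trace (Q ** W) - trace (P ** W) = trace ((Q - P) ** W)" by (simp add: matrix_sub_rdistrib trace_sub)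
    finally show ?thesis using QP by simp
  qed
  have sP: "\<And>a b. P$a$b = P$b$a"
    using inv_sym[OF pU sU] unfolding P_def by (metis transpose_def vec_lambda_beta)
  have pP: "quad P x > 0" if "x \<noteq> 0" for x
    using inv_pd[OF pU] that unfolding P_def pos_def_def by (simp add: quad_inner)
  obtain C :: "real^'n^'n" where C: "P = transpose C ** C" using chol[of P] sP pP by blast
  define Z where "Z = C ** W"
  have "trace (P ** W ** Q ** W) = trace (transpose C ** (C ** W ** Q ** W))"
    unfolding C by (simp add: matrix_mul_assoc)
  also have "\<dots> = trace (C ** W ** Q ** W ** transpose C)" by (rule trace_mul_sym)
  also have "\<dots> = trace (Z ** Q ** transpose Z)"
    unfolding Z_def using sW by (simp add: matrix_transpose_mul matrix_mul_assoc)
  also have "\<dots> = (\<Sum>m\<in>UNIV. quad Q (Z $ m))" by (rule trace_prod_diag)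
  finally have T: "trace (P ** W ** Q ** W) = (\<Sum>m\<in>UNIV. quad Q (Z $ m))" .
  have pQ: "pos_def Q" unfolding Q_def by (rule inv_pd[OF pV])
  have nn: "\<And>m. quad Q (Z $ m) \<ge> 0" using quad_ge0[OF pQ] by blast
  have T0: "trace (P ** W ** Q ** W) \<ge> 0" unfolding T by (rule sum_nonneg) (use nn in auto)
  show "(\<Sum>a\<in>UNIV. \<Sum>b\<in>UNIV. (matrix_inv U $ a $ b - matrix_inv V $ a $ b) * (U $ b $ a - V $ b $ a)) \<le> 0"
    unfolding S tr using T0 by simp
  assume "(\<Sum>a\<in>UNIV. \<Sum>b\<in>UNIV. (matrix_inv U $ a $ b - matrix_inv V $ a $ b) * (U $ b $ a - V $ b $ a)) = 0"
  then have "(\<Sum>m\<in>UNIV. quad Q (Z $ m)) = 0" unfolding S tr T by simp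
  then have "\<forall>m\<in>UNIV. quad Q (Z $ m) = 0" using sum_nonneg_eq_0_iff[of UNIV "\<lambda>m. quad Q (Z $ m)"] nn by simp
  then have "\<forall>m. Z $ m = 0" using quad_eq0[OF pQ] by blast
  then have Z0: "Z = 0" by (simp add: vec_eq_iff)
  have "W = U ** P ** W" using UP by simp
  also have "\<dots> = U ** (transpose C ** Z)" unfolding C Z_def by (simp add: matrix_mul_assoc)
  also have "\<dots> = 0" unfolding Z0 zero_mult_matrix by simp
  finally show "U = V" unfolding W_def by simp
qed

lemma box_splits:
  fixes e :: "real^'n::finite" and t :: real
  assumes t: "0 \<le> t" "t \<le> 1"
  and ie: "\<And>x. x \<bullet> e = x $ i" and ec: "\<And>k. e $ k = (if k = i then 1 else 0)"
  shows "cbox (t *\<^sub>R e) (1 + t *\<^sub>R e) \<inter> {x. 1 \<le> x \<bullet> e} = cbox e (1 + t *\<^sub>R e)"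
        "cbox (t *\<^sub>R e) (1 + t *\<^sub>R e) \<inter> {x. x \<bullet> e \<le> 1} = cbox (t *\<^sub>R e) 1"
        "cbox 0 1 \<inter> {x. x \<bullet> e \<le> t} = cbox 0 (1 + (t - 1) *\<^sub>R e)"
        "cbox 0 1 \<inter> {x. t \<le> x \<bullet> e} = cbox (t *\<^sub>R e) 1"
proof -
  have S1: "cbox a b \<inter> {x. x \<bullet> e \<le> c} = cbox a (\<chi> k. if k = i then min (b$i) c else b$k)" for a b :: "real^'n" and c
    using interval_split_cart(1)[where a=a and b=b and k=i and c=c] by (simp add: ie interval_cbox_cart)
  have S2: "cbox a b \<inter> {x. c \<le> x \<bullet> e} = cbox (\<chi> k. if k = i then max (a$i) c else a$k) b" for a b :: "real^'n" and c
    using interval_split_cart(2)[where a=a and b=b and k=i and c=c] by (simp add: ie interval_cbox_cart)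
  show "cbox (t *\<^sub>R e) (1 + t *\<^sub>R e) \<inter> {x. 1 \<le> x \<bullet> e} = cbox e (1 + t *\<^sub>R e)"
    unfolding S2 using t by (intro arg_cong2[where f=cbox]) (auto simp: vec_eq_iff ec)
  show "cbox (t *\<^sub>R e) (1 + t *\<^sub>R e) \<inter> {x. x \<bullet> e \<le> 1} = cbox (t *\<^sub>R e) 1"
    unfolding S1 using t by (intro arg_cong2[where f=cbox]) (auto simp: vec_eq_iff ec)
  show "cbox 0 1 \<inter> {x. x \<bullet> e \<le> t} = cbox 0 (1 + (t - 1) *\<^sub>R e)"
    unfolding S1 using t by (intro arg_cong2[where f=cbox]) (auto simp: vec_eq_iff ec)
  show "cbox 0 1 \<inter> {x. t \<le> x \<bullet> e} = cbox (t *\<^sub>R e) 1"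
    unfolding S2 using t by (intro arg_cong2[where f=cbox]) (auto simp: vec_eq_iff ec)
qed

lemma integral_shift_periodic:
  fixes g :: "real^'n::finite \<Rightarrow> real"
  assumes cont: "continuous_on UNIV g" and per: "\<And>x. g (x + axis i 1) = g x"
    and t: "0 \<le> t" "t \<le> 1"
  shows "integral (cbox 0 1) (\<lambda>x. g (x + t *\<^sub>R axis i 1)) = integral (cbox 0 1) g"
proof -
  define e :: "real^'n" where "e = axis i 1"
  define q :: "real^'n" where "q = 1 + (t - 1) *\<^sub>R e"
  have eB: "e \<in> Basis" unfolding e_def by simp
  have ie: "x \<bullet> e = x $ i" for x :: "real^'n" unfolding e_def by (simp add: inner_axis)
  have ec: "e $ k = (if k = i then 1 else 0)" for k unfolding e_def by (simp add: axis_def)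
  have int: "g integrable_on cbox a b" for a b
    by (rule integrable_continuous) (rule continuous_on_subset[OF cont], simp)
  have "((g \<circ> (+) (t *\<^sub>R e)) has_integral integral (cbox (0 + t *\<^sub>R e) (1 + t *\<^sub>R e)) g) (cbox 0 1)"
    using has_integral_shift_cbox_iff[of g "t *\<^sub>R e" _ 0 1] int[THEN integrable_integral] by simp
  then have s1: "integral (cbox 0 1) (\<lambda>x. g (x + t *\<^sub>R e)) = integral (cbox (t *\<^sub>R e) (1 + t *\<^sub>R e)) g"
    by (simp add: o_def add.commute integral_unique)
  note bs = box_splits[OF t ie ec]
  have A1: "cbox (t *\<^sub>R e) (1 + t *\<^sub>R e) \<inter> {x. x \<bullet> e \<le> 1} = cbox (t *\<^sub>R e) 1" by (rule bs(2))
  have A2: "cbox (t *\<^sub>R e) (1 + t *\<^sub>R e) \<inter> {x. 1 \<le> x \<bullet> e} = cbox e (1 + t *\<^sub>R e)" by (rule bs(1))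
  have B1: "cbox 0 1 \<inter> {x. x \<bullet> e \<le> t} = cbox 0 q" unfolding q_def by (rule bs(3))
  have B2: "cbox 0 1 \<inter> {x. t \<le> x \<bullet> e} = cbox (t *\<^sub>R e) 1" by (rule bs(4))
  have sA: "integral (cbox (t *\<^sub>R e) (1 + t *\<^sub>R e)) g = integral (cbox (t *\<^sub>R e) 1) g + integral (cbox e (1 + t *\<^sub>R e)) g"
    using integral_split[OF int eB, of "t *\<^sub>R e" "1 + t *\<^sub>R e" 1] A1 A2 by simp
  have sB: "integral (cbox 0 1) g = integral (cbox 0 q) g + integral (cbox (t *\<^sub>R e) 1) g"
    using integral_split[OF int eB, of 0 1 t] B1 B2 by simp
  have "((g \<circ> (+) e) has_integral integral (cbox (0 + e) (q + e)) g) (cbox 0 q)"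
    using has_integral_shift_cbox_iff[of g e _ 0 q] int[THEN integrable_integral] by simp
  moreover have "g \<circ> (+) e = g" using per unfolding e_def by (auto simp: o_def add.commute)
  moreover have "q + e = 1 + t *\<^sub>R e" unfolding q_def by (simp add: algebra_simps)
  ultimately have "integral (cbox e (1 + t *\<^sub>R e)) g = integral (cbox 0 q) g"
    by (simp add: integral_unique)
  then show ?thesis using s1 sA sB unfolding e_def by simp
qed

lemma integral_partial_periodic:
  fixes F :: "real^'n::finite \<Rightarrow> real"
  assumes sm: "smooth F" and per: "\<And>x. F (x + axis i 1) = F x"
  shows "integral (cbox 0 1) (partial i F) = 0"
proof -
  define e :: "real^'n" where "e = axis i 1"
  define I where "I t = integral (cbox 0 1) (\<lambda>x. F (x + t *\<^sub>R e))" for t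
  have cF: "continuous_on UNIV F" using sm smooth_cont by blast
  have cP: "continuous_on UNIV (partial i F)" using sm smooth_cont smooth_partial by blast
  have dF: "\<And>x. F differentiable (at x)" using sm smooth_diff by blast
  have Ic: "I t = I 0" if "t \<in> {-1<..<1}" for t
  proof (cases "t \<ge> 0")
    case True
    then show ?thesis using integral_shift_periodic[OF cF per, of t] that unfolding I_def e_def by simp
  next
    case False
    have "F (x + t *\<^sub>R e) = F (x + (t + 1) *\<^sub>R e)" for x
      using per[of "x + t *\<^sub>R e"] unfolding e_def by (simp add: algebra_simps)
    then have "I t = I (t + 1)" unfolding I_def by simp
    also have "\<dots> = I 0" using integral_shift_periodic[OF cF per, of "t + 1"] that False unfolding I_def e_def by simp
    finally show ?thesis .
  qed
  have der: "((\<lambda>t. integral (cbox 0 1) (\<lambda>x. F (x + t *\<^sub>R e))) has_field_derivative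
      integral (cbox 0 1) (\<lambda>x. partial i F (x + 0 *\<^sub>R e))) (at 0 within UNIV)"
  proof (rule leibniz_rule_field_derivative[where fx = "\<lambda>t x. partial i F (x + t *\<^sub>R e)"])
    show "((\<lambda>t. F (x + t *\<^sub>R e)) has_field_derivative partial i F (x + t *\<^sub>R e)) (at t within UNIV)" for x t
      unfolding e_def by (rule deriv_dir[OF dF])
    show "(\<lambda>x. F (x + t *\<^sub>R e)) integrable_on cbox 0 1" for t
      by (rule integrable_continuous, rule continuous_on_compose2[OF cF]) (auto intro!: continuous_intros)
    show "continuous_on (UNIV \<times> cbox 0 1) (\<lambda>(t, x). partial i F (x + t *\<^sub>R e))"
    proof -
      have "continuous_on (UNIV \<times> cbox 0 1) (\<lambda>p::real \<times> (real^'n). snd p + fst p *\<^sub>R e)"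
        by (intro continuous_intros)
      then have "continuous_on (UNIV \<times> cbox 0 1) (partial i F \<circ> (\<lambda>p::real \<times> (real^'n). snd p + fst p *\<^sub>R e))"
        by (rule continuous_on_compose) (rule continuous_on_subset[OF cP], simp)
      then show ?thesis by (simp add: o_def split_beta)
    qed
  qed auto
  then have d1: "DERIV I 0 :> integral (cbox 0 1) (partial i F)" unfolding I_def[abs_def] by simp
  have "DERIV (\<lambda>_. I 0) 0 :> integral (cbox 0 1) (partial i F)"
    by (rule has_field_derivative_transform_within_open[OF d1, of "{-1<..<1}"]) (simp, simp, erule Ic)
  then show ?thesis using DERIV_const DERIV_unique by blast
qed

lemma int_vec_axis: "int_vec (axis i 1 :: real^'n::finite)"
  unfolding int_vec_def by (simp add: axis_def)

lemma integrable_cont: fixes h :: "real^'n::finite \<Rightarrow> real" assumes "continuous_on UNIV h" shows "h integrable_on cbox a b"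
  by (rule integrable_continuous, rule continuous_on_subset[OF assms], simp)

lemma ibp:
  fixes f g :: "real^'n::finite \<Rightarrow> real"
  assumes sf: "smooth f" and sg: "smooth g" and pf: "Zn_periodic f" and pg: "Zn_periodic g"
  shows "integral (cbox 0 1) (\<lambda>x. partial i f x * g x) = - integral (cbox 0 1) (\<lambda>x. f x * partial i g x)"
proof -
  have sF: "smooth (\<lambda>x. f x * g x)" by (rule smooth_mult[OF sf sg])
  have pF: "(\<lambda>x. f x * g x) (x + axis i 1) = (\<lambda>x. f x * g x) x" for x
  proof -
    have "f (x + axis i 1) = f x" "g (x + axis i 1) = g x"
      using pf pg int_vec_axis[of i] unfolding Zn_periodic_def by blast+
    then show ?thesis by simp
  qed
  have e: "partial i (\<lambda>x. f x * g x) = (\<lambda>x. partial i f x * g x + f x * partial i g x)"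
    by (rule ext) (simp add: partial_mult smooth_diff sf sg)
  have c1: "continuous_on UNIV (\<lambda>x. partial i f x * g x)"
    by (intro smooth_cont smooth_mult smooth_partial sf sg)
  have c2: "continuous_on UNIV (\<lambda>x. f x * partial i g x)"
    by (intro smooth_cont smooth_mult smooth_partial sf sg)
  have "0 = integral (cbox 0 1) (partial i (\<lambda>x. f x * g x))"
    using integral_partial_periodic[OF sF pF] by simp
  also have "\<dots> = integral (cbox 0 1) (\<lambda>x. partial i f x * g x) + integral (cbox 0 1) (\<lambda>x. f x * partial i g x)"
    unfolding e by (rule integral_add[OF integrable_cont[OF c1] integrable_cont[OF c2]])
  finally show ?thesis by simp
qed

lemma smooth_det:
  fixes F :: "'n::finite \<Rightarrow> 'n \<Rightarrow> real^'m::finite \<Rightarrow> real"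
  assumes "\<And>a b. smooth (F a b)"
  shows "smooth (\<lambda>x. det (\<chi> a b. F a b x))"
  unfolding det_def
  by (intro smooth_sum smooth_mult smooth_const smooth_prod) (auto simp: assms finite_permutations)

lemma inv_entry:
  fixes M :: "real^'n::finite^'n"
  assumes "det M \<noteq> 0"
  shows "matrix_inv M $ k $ j = det (\<chi> a b. if b = k then (if a = j then 1 else 0) else M $ a $ b) / det M"
proof -
  have inv: "invertible M" using assms invertible_det_nz by blast
  then obtain M' where M': "M ** M' = mat 1" "M' ** M = mat 1" unfolding invertible_def by blast
  have "M ** matrix_inv M = mat 1 \<and> matrix_inv M ** M = mat 1"
    unfolding matrix_inv_def by (rule someI[of _ M']) (use M' in blast)
  then have "M *v (matrix_inv M *v axis j 1) = axis j 1" by (simp add: matrix_vector_mul_assoc)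
  then have "matrix_inv M *v axis j 1 = (\<chi> k. det(\<chi> a b. if b = k then axis j 1 $ a else M$a$b) / det M)"
    using cramer[OF assms] by blast
  then have "(matrix_inv M *v axis j 1) $ k = det(\<chi> a b. if b = k then axis j 1 $ a else M$a$b) / det M" by simp
  moreover have "(matrix_inv M *v axis j 1) $ k = matrix_inv M $ k $ j"
    by (simp add: matrix_vector_mult_def axis_def ifm2 sum.delta')
  moreover have "(\<chi> a b. if b = k then axis j 1 $ a else M$a$b) = (\<chi> a b. if b = k then (if a = j then 1 else 0) else M$a$b)"
    by (simp add: axis_def vec_eq_iff)
  ultimately show ?thesis by simp
qed

lemma smooth_if_const: "smooth h \<Longrightarrow> smooth (\<lambda>x. if P then c else h x)"
  by (cases P) (simp_all add: smooth_const)

lemma smooth_inv_entry: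
  fixes H :: "real^'n::finite \<Rightarrow> real^'m::finite^'m"
  assumes sH: "\<And>a b. smooth (\<lambda>x. H x $ a $ b)" and dH: "\<And>x. det (H x) \<noteq> 0"
  shows "smooth (\<lambda>x. matrix_inv (H x) $ k $ j)"
proof -
  have e: "(\<lambda>x. matrix_inv (H x) $ k $ j) =
     (\<lambda>x. det (\<chi> a b. if b = k then (if a = j then 1 else 0) else H x $ a $ b) / det (H x))"
    by (rule ext) (rule inv_entry[OF dH])
  have d1: "smooth (\<lambda>x. det (\<chi> a b. if b = k then (if a = j then 1 else 0) else H x $ a $ b))"
    by (rule smooth_det[where F = "\<lambda>a b x. if b = k then (if a = j then 1 else 0) else H x $ a $ b"])
       (auto intro!: smooth_if_const sH simp: smooth_const)
  have d2: "smooth (\<lambda>x. det (H x))"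
    using smooth_det[of "\<lambda>a b x. H x $ a $ b"] sH by simp
  show ?thesis unfolding e by (rule smooth_divide[OF d1 d2 dH])
qed

lemma per_extend:
  fixes f :: "real^'n::finite \<Rightarrow> real"
  assumes p: "Zn_periodic f" and z: "\<And>x. x \<in> cbox 0 1 \<Longrightarrow> f x = 0"
  shows "f y = 0"
proof -
  define k :: "real^'n" where "k = (\<chi> i. of_int (floor (y $ i)))"
  have ik: "int_vec k" unfolding int_vec_def k_def by simp
  have "y $ i - of_int (floor (y $ i)) \<le> 1" for i
    using real_of_int_floor_add_one_gt[of "y $ i"] by linarith
  then have "y - k \<in> cbox 0 1" unfolding mem_box_cart k_def
    by (simp add: of_int_floor_le)
  then have "f (y - k) = 0" by (rule z)
  moreover have "f (y - k + k) = f (y - k)" using p ik unfolding Zn_periodic_def by blast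
  ultimately show ?thesis by simp
qed

lemma const_of_zero_hessian:
  fixes w :: "real^'n::finite \<Rightarrow> real"
  assumes sw: "smooth w" and pw: "Zn_periodic w" and z: "\<And>a b x. partial b (partial a w) x = 0"
  shows "\<exists>c. \<forall>x. w x = c"
proof -
  have "\<exists>c. \<forall>x. partial a w x = c" for a
  proof -
    have "(partial a w has_derivative (\<lambda>h. 0)) (at x within UNIV)" for x
    proof -
      have "(partial a w has_derivative (\<lambda>h. \<Sum>k\<in>UNIV. h $ k * partial k (partial a w) x)) (at x)"
        by (rule has_derivative_expand) (use sw smooth_partial smooth_diff in blast)
      then show ?thesis by (simp add: z)
    qed
    then show ?thesis using has_derivative_zero_constant[of UNIV "partial a w"] by auto
  qed
  then obtain cf where cf: "\<And>a x. partial a w x = cf a" by metis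
  define cv :: "real^'n" where "cv = (\<chi> a. cf a)"
  define g where "g x = w x - cv \<bullet> x" for x
  have "(g has_derivative (\<lambda>h. 0)) (at x within UNIV)" for x
  proof -
    have d1: "(w has_derivative (\<lambda>h. \<Sum>k\<in>UNIV. h $ k * cf k)) (at x)"
      using has_derivative_expand[OF smooth_diff[OF sw], of x] by (simp add: cf)
    have d2: "((\<lambda>x. cv \<bullet> x) has_derivative (\<lambda>h. cv \<bullet> h)) (at x)"
      by (auto intro!: derivative_eq_intros)
    have "(g has_derivative (\<lambda>h. (\<Sum>k\<in>UNIV. h $ k * cf k) - cv \<bullet> h)) (at x)"
      unfolding g_def[abs_def] by (rule has_derivative_diff[OF d1 d2])
    moreover have "(\<lambda>h. (\<Sum>k\<in>UNIV. h $ k * cf k) - cv \<bullet> h) = (\<lambda>h. 0)"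
      by (rule ext) (simp add: cv_def inner_vec_def mult.commute)
    ultimately show ?thesis by simp
  qed
  then obtain d where d: "\<And>x. g x = d" using has_derivative_zero_constant[of UNIV g] by auto
  have "cf a = 0" for a
  proof -
    have "w (0 + axis a 1) = w 0" using pw int_vec_axis[of a] unfolding Zn_periodic_def by blast
    then have "g (axis a 1) + cv \<bullet> axis a 1 = g 0" unfolding g_def by simp
    then show ?thesis using d[of "axis a 1"] d[of 0] by (simp add: inner_axis cv_def)
  qed
  then have "cv = 0" unfolding cv_def by (simp add: vec_eq_iff)
  then have "\<forall>x. w x = d" using d unfolding g_def by simp
  then show ?thesis by blast
qed

lemma hess_entry_u:
  fixes \<phi> :: "real^'n::finite \<Rightarrow> real"
  assumes s: "smooth \<phi>"
  shows "partial a (partial b (\<lambda>x. (1/2) * (norm x)\<^sup>2 + \<phi> x)) = (\<lambda>x. (if a = b then 1 else 0) + partial a (partial b \<phi>) x)"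
proof -
  have e1: "partial b (\<lambda>x. (1/2) * (norm x)\<^sup>2 + \<phi> x) = (\<lambda>x. x $ b + partial b \<phi> x)"
  proof
    fix x
    have "partial b (\<lambda>x. (1/2) * (norm x)\<^sup>2 + \<phi> x) x = partial b (\<lambda>x::real^'n. (1/2) * (norm x)\<^sup>2) x + partial b \<phi> x"
      by (rule partial_add) (use smooth_diff smooth_half_norm s in blast)+
    moreover have "partial b (\<lambda>x::real^'n. (1/2) * (norm x)\<^sup>2) x = x $ b"
      by (simp only: partial_half_norm)
    ultimately show "partial b (\<lambda>x. (1/2) * (norm x)\<^sup>2 + \<phi> x) x = x $ b + partial b \<phi> x"
      by simp
  qed
  show ?thesis unfolding e1
  proof
    fix x
    have "partial a (\<lambda>x. x $ b + partial b \<phi> x) x = partial a (\<lambda>x::real^'n. x $ b) x + partial a (partial b \<phi>) x"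
      by (rule partial_add) (use smooth_diff smooth_coord smooth_partial s in blast)+
    then show "partial a (\<lambda>x. x $ b + partial b \<phi> x) x = (if a = b then 1 else 0) + partial a (partial b \<phi>) x"
      by (simp add: partial_coord)
  qed
qed

theorem mainTheorem4:
  fixes A \<phi>0 \<phi>1 :: "real^'n::finite \<Rightarrow> real"
  assumes "smooth A" and "Zn_periodic A"
    and "smooth \<phi>0" and "Zn_periodic \<phi>0"
    and "smooth \<phi>1" and "Zn_periodic \<phi>1"
    and "u = (\<lambda>x. (1/2) * (norm x)\<^sup>2 + \<phi>0 x)"
    and "v = (\<lambda>x. (1/2) * (norm x)\<^sup>2 + \<phi>1 x)"
    and "convex_on UNIV u" and "convex_on UNIV v"
    and "\<forall>x. pos_def (hessian u x)" and "\<forall>x. pos_def (hessian v x)"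
    and "\<forall>x. abreu_op u x = A x" and "\<forall>x. abreu_op v x = A x"
  shows "\<exists>c. \<forall>x. \<phi>0 x = \<phi>1 x + c"
proof -
  note s0 = assms(3) and p0 = assms(4) and s1 = assms(5) and p1 = assms(6)
  note ud = assms(7) and vd = assms(8) and pdu = assms(11) and pdv = assms(12)
  note abu = assms(13) and abv = assms(14)
  have su: "smooth u" unfolding ud by (intro smooth_add smooth_half_norm s0)
  have sv: "smooth v" unfolding vd by (intro smooth_add smooth_half_norm s1)
  define w where "w = (\<lambda>x. \<phi>0 x - \<phi>1 x)"
  have sw: "smooth w" unfolding w_def by (intro smooth_diff' s0 s1)
  have pw: "Zn_periodic w" using p0 p1 unfolding w_def Zn_periodic_def by simp
  have uvw: "w = (\<lambda>x. u x - v x)" unfolding w_def ud vd by simp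
  have hent: "\<And>f x a b. hessian f x $ a $ b = partial a (partial b f) x" by (simp add: hessian_def)
  have hu: "\<And>a b. partial a (partial b u) = (\<lambda>x. (if a = b then 1 else 0) + partial a (partial b \<phi>0) x)"
    using hess_entry_u[OF s0] ud by simp
  have hv: "\<And>a b. partial a (partial b v) = (\<lambda>x. (if a = b then 1 else 0) + partial a (partial b \<phi>1) x)"
    using hess_entry_u[OF s1] vd by simp
  have Hus: "smooth (\<lambda>x. hessian u x $ a $ b)" for a b
    unfolding hent by (intro smooth_partial su)
  have Hvs: "smooth (\<lambda>x. hessian v x $ a $ b)" for a b
    unfolding hent by (intro smooth_partial sv)
  have Hup: "hessian u (x + k) = hessian u x" if "int_vec k" for x k
  proof -
    have "Zn_periodic (partial a (partial b \<phi>0))" for a b by (intro Zn_periodic_partial smooth_partial s0 p0)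
    then show ?thesis using that unfolding vec_eq_iff hent hu Zn_periodic_def by simp
  qed
  have Hvp: "hessian v (x + k) = hessian v x" if "int_vec k" for x k
  proof -
    have "Zn_periodic (partial a (partial b \<phi>1))" for a b by (intro Zn_periodic_partial smooth_partial s1 p1)
    then show ?thesis using that unfolding vec_eq_iff hent hv Zn_periodic_def by simp
  qed
  have symu: "transpose (hessian u x) = hessian u x" for x
    by (simp add: transpose_def vec_eq_iff hent clairaut[OF su])
  have symv: "transpose (hessian v x) = hessian v x" for x
    by (simp add: transpose_def vec_eq_iff hent clairaut[OF sv])
  have detu: "det (hessian u x) \<noteq> 0" for x
    using pd_invertible[OF pdu[rule_format, of x]] invertible_det_nz unfolding invertible_def by blast
  have detv: "det (hessian v x) \<noteq> 0" for x
    using pd_invertible[OF pdv[rule_format, of x]] invertible_det_nz unfolding invertible_def by blast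
  define R where "R a b = (\<lambda>x. matrix_inv (hessian u x) $ a $ b - matrix_inv (hessian v x) $ a $ b)" for a b
  have sPu: "smooth (\<lambda>x. matrix_inv (hessian u x) $ a $ b)" for a b
    by (rule smooth_inv_entry[OF Hus detu])
  have sPv: "smooth (\<lambda>x. matrix_inv (hessian v x) $ a $ b)" for a b
    by (rule smooth_inv_entry[OF Hvs detv])
  have sR: "smooth (R a b)" for a b unfolding R_def by (intro smooth_diff' sPu sPv)
  have pR: "Zn_periodic (R a b)" for a b unfolding R_def Zn_periodic_def using Hup Hvp by simp
  have dR: "partial a (partial b (R a b)) x =
      partial a (partial b (\<lambda>x. matrix_inv (hessian u x) $ a $ b)) x - partial a (partial b (\<lambda>x. matrix_inv (hessian v x) $ a $ b)) x"
    for a b x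
  proof -
    have "partial b (R a b) = (\<lambda>y. partial b (\<lambda>x. matrix_inv (hessian u x) $ a $ b) y - partial b (\<lambda>x. matrix_inv (hessian v x) $ a $ b) y)"
      unfolding R_def by (rule ext, rule partial_diff) (use sPu sPv smooth_diff in blast)+
    then show ?thesis
      by (simp, intro partial_diff) (use sPu sPv smooth_diff smooth_partial in blast)+
  qed
  have ab0: "(\<Sum>a\<in>UNIV. \<Sum>b\<in>UNIV. partial a (partial b (R a b)) x) = 0" for x
  proof -
    have "(\<Sum>a\<in>UNIV. \<Sum>b\<in>UNIV. partial a (partial b (R a b)) x) = abreu_op u x - abreu_op v x"
      unfolding abreu_op_def dR by (simp add: sum_subtractf)
    then show ?thesis using abu abv by simp
  qed
  have Hw: "partial b (partial a w) x = hessian u x $ b $ a - hessian v x $ b $ a" for a b x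
  proof -
    have "partial a w = (\<lambda>y. partial a u y - partial a v y)"
      unfolding uvw by (rule ext, rule partial_diff) (use su sv smooth_diff in blast)+
    then show ?thesis unfolding hent
      by (simp, intro partial_diff) (use su sv smooth_diff smooth_partial in blast)+
  qed
  define Psi where "Psi x = (\<Sum>a\<in>UNIV. \<Sum>b\<in>UNIV. R a b x * partial b (partial a w) x)" for x
  have Psi_eq: "Psi x = (\<Sum>a\<in>UNIV. \<Sum>b\<in>UNIV. (matrix_inv (hessian u x) $ a $ b - matrix_inv (hessian v x) $ a $ b)
       * (hessian u x $ b $ a - hessian v x $ b $ a))" for x
    unfolding Psi_def R_def Hw ..
  have Psi_le: "Psi x \<le> 0" for x
    unfolding Psi_eq by (rule hess_ineq(1)[OF pdu[rule_format] pdv[rule_format] symu symv])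
  have sPsi: "smooth Psi"
    unfolding Psi_def[abs_def] by (intro smooth_sum smooth_mult sR smooth_partial sw) auto
  have sww: "smooth (partial b (partial a w))" for a b by (intro smooth_partial sw)
  have int_sm: "f integrable_on cbox 0 1" if "smooth f" for f :: "real^'n \<Rightarrow> real"
    by (rule integrable_cont[OF smooth_cont[OF that]])
  have I2: "integral (cbox 0 1) (\<lambda>x. R a b x * partial b (partial a w) x) =
      integral (cbox 0 1) (\<lambda>x. partial a (partial b (R a b)) x * w x)" for a b
  proof -
    have "integral (cbox 0 1) (\<lambda>x. partial b (R a b) x * partial a w x) = - integral (cbox 0 1) (\<lambda>x. R a b x * partial b (partial a w) x)"
      by (rule ibp) (intro sR pR smooth_partial sw Zn_periodic_partial pw)+
    moreover have "integral (cbox 0 1) (\<lambda>x. partial a (partial b (R a b)) x * w x) = - integral (cbox 0 1) (\<lambda>x. partial b (R a b) x * partial a w x)"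
      by (rule ibp) (intro sR pR smooth_partial sw Zn_periodic_partial pw)+
    ultimately show ?thesis by simp
  qed
  have "integral (cbox 0 1) Psi = (\<Sum>a\<in>UNIV. integral (cbox 0 1) (\<lambda>x. \<Sum>b\<in>UNIV. R a b x * partial b (partial a w) x))"
    unfolding Psi_def by (rule integral_sum) (auto intro!: int_sm smooth_sum smooth_mult sR sww)
  also have "\<dots> = (\<Sum>a\<in>UNIV. \<Sum>b\<in>UNIV. integral (cbox 0 1) (\<lambda>x. R a b x * partial b (partial a w) x))"
    by (rule sum.cong[OF refl], rule integral_sum) (auto intro!: int_sm smooth_mult sR sww)
  also have "\<dots> = (\<Sum>a\<in>UNIV. \<Sum>b\<in>UNIV. integral (cbox 0 1) (\<lambda>x. partial a (partial b (R a b)) x * w x))"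
    by (simp add: I2)
  also have "\<dots> = (\<Sum>a\<in>UNIV. integral (cbox 0 1) (\<lambda>x. \<Sum>b\<in>UNIV. partial a (partial b (R a b)) x * w x))"
    by (rule sum.cong[OF refl], rule integral_sum[symmetric]) (auto intro!: int_sm smooth_mult sR sw smooth_partial)
  also have "\<dots> = integral (cbox 0 1) (\<lambda>x. \<Sum>a\<in>UNIV. \<Sum>b\<in>UNIV. partial a (partial b (R a b)) x * w x)"
    by (rule integral_sum[symmetric]) (auto intro!: int_sm smooth_sum smooth_mult sR sw smooth_partial)
  also have "\<dots> = integral (cbox 0 1) (\<lambda>x. 0)"
  proof -
    have "(\<Sum>a\<in>UNIV. \<Sum>b\<in>UNIV. partial a (partial b (R a b)) x * w x) = 0" for x
      using ab0[of x] by (simp add: sum_distrib_right[symmetric])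
    then show ?thesis by simp
  qed
  finally have I0: "integral (cbox 0 1) Psi = 0" by simp
  have Psi0: "Psi x = 0" if x: "x \<in> cbox 0 1" for x
  proof -
    have in1: "(\<lambda>x. - Psi x) integrable_on cbox 0 1" by (rule integrable_neg[OF int_sm[OF sPsi]])
    have "integral (cbox 0 1) (\<lambda>x. - Psi x) = 0" using I0 by (simp add: integral_neg)
    then have "((\<lambda>x. - Psi x) has_integral 0) (cbox 0 1)"
      using in1 has_integral_integral by metis
    moreover have "continuous_on (cbox 0 1) (\<lambda>x. - Psi x)" by (intro continuous_intros smooth_cont sPsi)
    moreover have "box (0::real^'n) 1 \<noteq> {}"
    proof -
      have "((\<chi> i. 1/2) :: real^'n) \<in> box (0::real^'n) 1" by (simp add: mem_box_cart)
      then show ?thesis by blast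
    qed
    ultimately have "- Psi x = 0" using has_integral_0_cbox_imp_0[of 0 1 "\<lambda>x. - Psi x" x] x Psi_le
      by (simp add: neg_le_0_iff_le)
    then show ?thesis by simp
  qed
  have Hw0: "partial b (partial a w) x = 0" for a b x
  proof (rule per_extend[of "partial b (partial a w)"])
    show "Zn_periodic (partial b (partial a w))" by (intro Zn_periodic_partial smooth_partial sw pw)
    fix y :: "real^'n" assume "y \<in> cbox 0 1"
    then have "Psi y = 0" by (rule Psi0)
    then have "hessian u y = hessian v y"
      using hess_ineq(2)[OF pdu[rule_format] pdv[rule_format] symu symv] unfolding Psi_eq by blast
    then show "partial b (partial a w) y = 0" unfolding Hw by simp
  qed
  obtain c where "\<forall>x. w x = c" using const_of_zero_hessian[OF sw pw Hw0] by blast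
  then have "\<forall>x. \<phi>0 x = \<phi>1 x + c" unfolding w_def by (simp add: algebra_simps)
  then show ?thesis by blast
qed

end
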